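(* Consider the Markov process on $\{0,1\}^{\{1,2,3,\dots\}}$ described in the context. It has a stationary distribution under which, for every $i\ge1$, $$P(A_i=1)=\frac{\lambda_a}{\lambda}\Bigl(\frac{\lambda}{\lambda+\delta}\Bigr)^i,\qquad P(A_i=1,A_{i+1}=1)=\frac{\lambda_a^2}{\lambda(\lambda+\delta)}\Bigl(\frac{\lambda}{\lambda+2\delta}\Bigr)^i,$$ and these are the limits as $t\to\infty$ of $P_t(A_i=1)$ and $P_t(A_i=1,A_{i+1}=1)$ from any initial distribution.
   Context: Parameters $\lambda_a,\lambda_b>0$, $\delta>0$, $\lambda=\lambda_a+\lambda_b$. A configuration is a sequence $(A_1,A_2,\dots)\in\{0,1\}^{\{1,2,\dots\}}$ ($A_i=1$: fast vehicle, $A_i=0$: slow vehicle, index $1$ being the most recently arrived). Dynamics in continuous time: at rate $\lambda_a$ an arrival occurs, whereupon the sequence is shifted ($A_{i+1}\leftarrow A_i$ for all $i\ge1$) and $A_1$ is set to $1$; at rate $\lambda_b$ the same shift occurs and $A_1$ is set to $0$; independently, each site $i$ with $A_i=1$ switches to $A_i=0$ at rate $\delta$. *)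

theory Defs
  imports "HOL-Probability.Probability"
begin

text \<open>Configurations: site k (0-based) of a config A :: nat \<Rightarrow> bool corresponds to the
  paper's site i = k+1; True = fast vehicle (A_i = 1), False = slow vehicle.\<close>

type_synonym config = "nat \<Rightarrow> bool"

definition config_space :: "config measure" where
  "config_space = PiM UNIV (\<lambda>_. count_space UNIV)"

text \<open>Arrival of a vehicle of type b: shift every site by one and put b at the first site.\<close>
definition push :: "bool \<Rightarrow> config \<Rightarrow> config" where
  "push b A = (\<lambda>i. if i = 0 then b else A (i - 1))"

definition cylinder :: "(config \<Rightarrow> real) \<Rightarrow> bool" where
  "cylinder f \<longleftrightarrow> (\<exists>n. \<forall>A B. (\<forall>i<n. A i = B i) \<longrightarrow> f A = f B)"

text \<open>Generator of the process applied to a cylinder function. For cylinder f only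
  finitely many sites contribute to the flip sum.\<close>
definition gen :: "real \<Rightarrow> real \<Rightarrow> real \<Rightarrow> (config \<Rightarrow> real) \<Rightarrow> config \<Rightarrow> real" where
  "gen la lb d f A =
     la * (f (push True A) - f A) + lb * (f (push False A) - f A)
     + d * (\<Sum>i\<in>{i. A i \<and> f (A(i := False)) \<noteq> f A}. f (A(i := False)) - f A)"

text \<open>A family of laws (mu t)_{t \<ge> 0} of the process: probability measures on the
  configuration space evolving by the Kolmogorov forward equation
  d/dt E_t[f] = E_t[L f] for every cylinder function f.\<close>
definition law_evolution :: "real \<Rightarrow> real \<Rightarrow> real \<Rightarrow> (real \<Rightarrow> config measure) \<Rightarrow> bool" where
  "law_evolution la lb d \<mu> \<longleftrightarrow>
     (\<forall>t\<ge>0. prob_space (\<mu> t) \<and> sets (\<mu> t) = sets config_space) \<and>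
     (\<forall>f. cylinder f \<longrightarrow>
        (\<forall>t\<ge>0. ((\<lambda>s. integral\<^sup>L (\<mu> s) f) has_real_derivative integral\<^sup>L (\<mu> t) (gen la lb d f))
                  (at t within {0..})))"

definition stationary :: "real \<Rightarrow> real \<Rightarrow> real \<Rightarrow> config measure \<Rightarrow> bool" where
  "stationary la lb d \<mu> \<longleftrightarrow> law_evolution la lb d (\<lambda>_. \<mu>)"

end

theory Submission
  imports Defs "HOL-Real_Asymp.Real_Asymp"
begin

lemma deriv_at_from_within:
  assumes "(y has_real_derivative D) (at t within {0..})" "t > 0"
  shows "(y has_real_derivative D) (at t)"
  using assms at_within_interior[of t "{0::real..}"] by simp

lemma ode_upper:
  fixes y g :: "real \<Rightarrow> real" and c e T :: real
  assumes c: "c > 0" and T: "T > 0"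
    and der: "\<And>t. t \<ge> T \<Longrightarrow> (y has_real_derivative (g t - c * y t)) (at t)"
    and gb: "\<And>t. t \<ge> T \<Longrightarrow> g t \<le> e"
    and t: "t \<ge> T"
  shows "y t \<le> exp (c * (T - t)) * (y T - e / c) + e / c"
proof -
  define w where "w t = exp (c * t) * (y t - e / c)" for t
  have dw: "(w has_real_derivative exp (c * t) * (g t - e)) (at t)" if "t \<ge> T" for t
  proof -
    have "(w has_real_derivative (exp (c * t) * c) * (y t - e / c) + exp (c * t) * (g t - c * y t)) (at t)"
      unfolding w_def
      by (auto intro!: derivative_eq_intros der that)
    moreover have "(exp (c * t) * c) * (y t - e / c) + exp (c * t) * (g t - c * y t) = exp (c * t) * (g t - e)"
      using c by (simp add: field_simps)
    ultimately show ?thesis by simp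
  qed
  have "w t \<le> w T"
    by (rule deriv_nonpos_imp_antimono[where g' = "\<lambda>t. exp (c * t) * (g t - e)"])
       (use dw gb t in \<open>auto intro!: mult_nonneg_nonpos\<close>)
  then have "exp (c * t) * (y t - e / c) \<le> exp (c * T) * (y T - e / c)" by (simp add: w_def)
  then have "y t - e / c \<le> exp (c * T) * (y T - e / c) / exp (c * t)"
    by (simp add: field_simps)
  also have "\<dots> = exp (c * (T - t)) * (y T - e / c)"
    by (simp add: right_diff_distrib exp_diff diff_divide_distrib)
  finally show ?thesis by simp
qed

lemma ode_lower:
  fixes y g :: "real \<Rightarrow> real" and c e T :: real
  assumes c: "c > 0" and T: "T > 0"
    and der: "\<And>t. t \<ge> T \<Longrightarrow> (y has_real_derivative (g t - c * y t)) (at t)"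
    and gb: "\<And>t. t \<ge> T \<Longrightarrow> g t \<ge> e"
    and t: "t \<ge> T"
  shows "y t \<ge> exp (c * (T - t)) * (y T - e / c) + e / c"
proof -
  have "- y t \<le> exp (c * (T - t)) * (- y T - (- e) / c) + (- e) / c"
    by (rule ode_upper[where g = "\<lambda>t. - g t" and y = "\<lambda>t. - y t"])
       (use assms in \<open>auto intro!: derivative_eq_intros\<close>)
  then show ?thesis by (simp add: field_simps)
qed

lemma ode_limit:
  fixes y g :: "real \<Rightarrow> real" and c L :: real
  assumes c: "c > 0"
    and der: "\<And>t. t \<ge> 0 \<Longrightarrow> (y has_real_derivative (g t - c * y t)) (at t within {0..})"
    and lim: "(g \<longlongrightarrow> L) at_top"
  shows "(y \<longlongrightarrow> L / c) at_top"
proof (rule tendstoI)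
  fix \<epsilon> :: real assume \<epsilon>: "\<epsilon> > 0"
  define \<eta> where "\<eta> = \<epsilon> * c / 4"
  have \<eta>: "\<eta> > 0" using \<epsilon> c by (simp add: \<eta>_def)
  from tendstoD[OF lim \<eta>] obtain T0 where T0: "\<And>t. t \<ge> T0 \<Longrightarrow> dist (g t) L < \<eta>"
    unfolding eventually_at_top_linorder by blast
  define T where "T = max T0 1"
  have T: "T > 0" "T \<ge> T0" by (auto simp: T_def)
  have der': "(y has_real_derivative (g t - c * y t)) (at t)" if "t \<ge> T" for t
    using der[of t] that T by (intro deriv_at_from_within) auto
  have gu: "g t \<le> L + \<eta>" and gl: "g t \<ge> L - \<eta>" if "t \<ge> T" for t
    using T0[of t] that T by (auto simp: dist_real_def abs_less_iff)
  define B where "B = \<bar>y T - (L + \<eta>) / c\<bar> + \<bar>y T - (L - \<eta>) / c\<bar>"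
  have "((\<lambda>t. exp (c * (T - t)) * B) \<longlongrightarrow> 0 * B) at_top"
  proof (intro tendsto_mult tendsto_const)
    have "filterlim (\<lambda>t. c * (T - t)) at_bot at_top"
      using c by real_asymp
    then show "((\<lambda>t. exp (c * (T - t))) \<longlongrightarrow> 0) at_top"
      using exp_at_bot filterlim_compose by blast
  qed
  then have "eventually (\<lambda>t. exp (c * (T - t)) * B < \<eta> / c) at_top"
    using \<eta> c by (intro order_tendstoD) auto
  moreover have "eventually (\<lambda>t. t \<ge> T) at_top" by simp
  ultimately show "eventually (\<lambda>t. dist (y t) (L / c) < \<epsilon>) at_top"
  proof eventually_elim
    case (elim t)
    have up: "y t \<le> exp (c * (T - t)) * (y T - (L + \<eta>) / c) + (L + \<eta>) / c"
      by (rule ode_upper[OF c T(1) der' gu]) (use elim in auto)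
    have lo: "y t \<ge> exp (c * (T - t)) * (y T - (L - \<eta>) / c) + (L - \<eta>) / c"
      by (rule ode_lower[OF c T(1) der' gl]) (use elim in auto)
    have e0: "exp (c * (T - t)) > 0" by simp
    have a1: "exp (c * (T - t)) * (y T - (L + \<eta>) / c) \<le> exp (c * (T - t)) * B"
      using e0 by (intro mult_left_mono) (auto simp: B_def)
    have a2: "- (exp (c * (T - t)) * B) \<le> exp (c * (T - t)) * (y T - (L - \<eta>) / c)"
    proof -
      have "-(y T - (L - \<eta>) / c) \<le> B" by (auto simp: B_def)
      then have "exp (c * (T - t)) * (-(y T - (L - \<eta>) / c)) \<le> exp (c * (T - t)) * B"
        using e0 by (intro mult_left_mono) auto
      then show ?thesis by (simp add: algebra_simps)
    qed
    have h1: "\<eta> / c + \<eta> / c < \<epsilon>" using \<epsilon> c by (simp add: \<eta>_def field_simps)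
    have h2: "(L + \<eta>) / c = L / c + \<eta> / c" by (simp add: add_divide_distrib)
    have h3: "(L - \<eta>) / c = L / c - \<eta> / c" by (simp add: diff_divide_distrib)
    have "y t - L / c < \<epsilon>" using up a1 elim(1) h1 h2 by linarith
    moreover have "L / c - y t < \<epsilon>" using lo a2 elim(1) h1 h3 by linarith
    ultimately show ?case by (simp add: dist_real_def abs_less_iff)
  qed
qed



definition mon :: "nat set \<Rightarrow> config \<Rightarrow> real" where
  "mon S A = (if \<forall>i\<in>S. A i then 1 else 0)"

definition shiftS :: "nat set \<Rightarrow> nat set" where
  "shiftS S = {j. Suc j \<in> S}"

definition gen2 :: "real \<Rightarrow> real \<Rightarrow> real \<Rightarrow> nat \<Rightarrow> (config \<Rightarrow> real) \<Rightarrow> config \<Rightarrow> real" where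
  "gen2 la lb d n f A =
     la * (f (push True A) - f A) + lb * (f (push False A) - f A)
     + d * (\<Sum>i\<in>{i. i < n \<and> A i}. f (A(i := False)) - f A)"

definition width :: "nat \<Rightarrow> (config \<Rightarrow> real) \<Rightarrow> bool" where
  "width n f \<longleftrightarrow> (\<forall>A B. (\<forall>i<n. A i = B i) \<longrightarrow> f A = f B)"

lemma gen_eq_gen2:
  assumes "width n f"
  shows "gen la lb d f A = gen2 la lb d n f A"
proof -
  have sub: "{i. A i \<and> f (A(i := False)) \<noteq> f A} \<subseteq> {i. i < n \<and> A i}"
  proof
    fix i assume i: "i \<in> {i. A i \<and> f (A(i := False)) \<noteq> f A}"
    show "i \<in> {i. i < n \<and> A i}"
    proof (rule ccontr)
      assume "i \<notin> {i. i < n \<and> A i}"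
      then have "i \<ge> n" using i by auto
      then have "f (A(i := False)) = f A"
        using assms unfolding width_def by (metis fun_upd_other leD)
      then show False using i by auto
    qed
  qed
  have "(\<Sum>i\<in>{i. A i \<and> f (A(i := False)) \<noteq> f A}. f (A(i := False)) - f A)
      = (\<Sum>i\<in>{i. i < n \<and> A i}. f (A(i := False)) - f A)"
    by (rule sum.mono_neutral_left) (use sub in auto)
  then show ?thesis unfolding gen_def gen2_def by simp
qed

lemma width_mono: "S \<subseteq> {..<n} \<Longrightarrow> width n (mon S)"
  unfolding width_def mon_def by auto

lemma mono_push: "mon S (push b A) = (if 0 \<in> S \<and> \<not> b then 0 else mon (shiftS S) A)"
proof -
  have "(\<forall>i\<in>S. push b A i) \<longleftrightarrow> (0 \<in> S \<longrightarrow> b) \<and> (\<forall>j\<in>shiftS S. A j)"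
  proof
    assume H: "\<forall>i\<in>S. push b A i"
    show "(0 \<in> S \<longrightarrow> b) \<and> (\<forall>j\<in>shiftS S. A j)"
    proof
      show "0 \<in> S \<longrightarrow> b" using H by (auto simp: push_def)
      show "\<forall>j\<in>shiftS S. A j"
      proof
        fix j assume "j \<in> shiftS S"
        then have "Suc j \<in> S" by (simp add: shiftS_def)
        then show "A j" using H by (force simp: push_def)
      qed
    qed
  next
    assume H: "(0 \<in> S \<longrightarrow> b) \<and> (\<forall>j\<in>shiftS S. A j)"
    show "\<forall>i\<in>S. push b A i"
    proof
      fix i assume i: "i \<in> S"
      show "push b A i"
      proof (cases i)
        case 0 then show ?thesis using H i by (simp add: push_def)
      next
        case (Suc j) then show ?thesis using H i by (simp add: push_def shiftS_def)
      qed
    qed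
  qed
  then show ?thesis unfolding mon_def by auto
qed

lemma card_shiftS:
  assumes "finite S" shows "card (shiftS S) = (if 0 \<in> S then card S - 1 else card S)"
proof -
  have "S - {0} = Suc ` shiftS S" unfolding shiftS_def
    by (auto simp: image_iff) (metis Suc_pred' neq0_conv)
  then have "card (S - {0}) = card (shiftS S)" by (simp add: card_image)
  then show ?thesis using assms by (auto simp: card_Diff_singleton)
qed

lemma gen2_mono:
  assumes S: "S \<subseteq> {..<n}"
  shows "gen2 la lb d n (mon S) A =
     (if 0 \<in> S then la else la + lb) * mon (shiftS S) A - (la + lb + d * card S) * mon S A"
proof -
  have fin: "finite S" using S finite_subset by blast
  have flip: "(\<Sum>i\<in>{i. i < n \<and> A i}. mon S (A(i := False)) - mon S A) = - card S * mon S A"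
  proof (cases "\<forall>i\<in>S. A i")
    case True
    have "(\<Sum>i\<in>{i. i < n \<and> A i}. mon S (A(i := False)) - mon S A)
        = (\<Sum>i\<in>{i. i < n \<and> A i}. if i \<in> S then -1 else 0)"
      by (rule sum.cong) (use True in \<open>auto simp: mon_def\<close>)
    also have "\<dots> = - real (card ({i. i < n \<and> A i} \<inter> S))"
      by (simp add: sum.If_cases)
    also have "{i. i < n \<and> A i} \<inter> S = S" using True S by auto
    finally show ?thesis using True by (simp add: mon_def)
  next
    case False
    then show ?thesis by (auto simp: mon_def intro!: sum.neutral)
  qed
  show ?thesis
    unfolding gen2_def flip mono_push
    by (auto simp: algebra_simps mon_def)
qed

inductive_set spanM :: "nat \<Rightarrow> (config \<Rightarrow> real) set" for n where
  monI: "S \<subseteq> {..<n} \<Longrightarrow> mon S \<in> spanM n"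
| add: "f \<in> spanM n \<Longrightarrow> g \<in> spanM n \<Longrightarrow> (\<lambda>A. f A + g A) \<in> spanM n"
| smult: "f \<in> spanM n \<Longrightarrow> (\<lambda>A. c * f A) \<in> spanM n"

lemma spanM_mono_mult:
  assumes "f \<in> spanM n" "j < n"
  shows "(\<lambda>A. mon {j} A * f A) \<in> spanM n"
  using assms(1)
proof induction
  case (monI S)
  have "(\<lambda>A. mon {j} A * mon S A) = mon (insert j S)"
    by (auto simp: mon_def)
  then show ?case using monI assms(2) by (auto intro!: spanM.monI)
next
  case (add f g)
  then show ?case using spanM.add[OF add.IH] by (simp add: distrib_left)
next
  case (smult f c)
  then show ?case using spanM.smult[OF smult.IH, of c] by (simp add: mult.left_commute)
qed

lemma spanM_le: "f \<in> spanM n \<Longrightarrow> n \<le> m \<Longrightarrow> f \<in> spanM m"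
proof (induction rule: spanM.induct)
  case (monI S)
  then show ?case by (intro spanM.monI) auto
qed (auto intro: spanM.intros)

lemma width_spanM: "width n f \<Longrightarrow> f \<in> spanM n"
proof (induction n arbitrary: f)
  case 0
  then have "f = (\<lambda>A. f (\<lambda>_. False) * mon {} A)"
    by (auto simp: width_def mon_def)
  then show ?case by (metis spanM.monI spanM.smult empty_subsetI)
next
  case (Suc n)
  define f0 where "f0 A = f (A(n := False))" for A
  define f1 where "f1 A = f (A(n := True))" for A
  have w0: "width n f0" and w1: "width n f1"
    using Suc.prems unfolding width_def f0_def f1_def
    by (auto simp: less_Suc_eq)
  have s0: "f0 \<in> spanM (Suc n)" and s1: "f1 \<in> spanM (Suc n)"
    using Suc.IH[OF w0] Suc.IH[OF w1] by (auto intro: spanM_le)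
  have "(\<lambda>A. f1 A + (-1) * f0 A) \<in> spanM (Suc n)"
    by (intro spanM.add spanM.smult s0 s1)
  then have "(\<lambda>A. mon {n} A * (f1 A + (-1) * f0 A)) \<in> spanM (Suc n)"
    by (rule spanM_mono_mult) simp
  then have "(\<lambda>A. f0 A + mon {n} A * (f1 A + (-1) * f0 A)) \<in> spanM (Suc n)"
    by (intro spanM.add s0)
  moreover have "(\<lambda>A. f0 A + mon {n} A * (f1 A + (-1) * f0 A)) = f"
    by (auto simp: mon_def f0_def f1_def fun_upd_idem)
  ultimately show ?case by simp
qed

lemma gen2_add: "gen2 la lb d n (\<lambda>A. f A + g A) A = gen2 la lb d n f A + gen2 la lb d n g A"
proof -
  have "(\<Sum>i\<in>{i. i < n \<and> A i}. f (A(i := False)) + g (A(i := False)) - (f A + g A))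
      = (\<Sum>i\<in>{i. i < n \<and> A i}. f (A(i := False)) - f A) + (\<Sum>i\<in>{i. i < n \<and> A i}. g (A(i := False)) - g A)"
    by (subst sum.distrib[symmetric]) (rule sum.cong, auto)
  then show ?thesis unfolding gen2_def by (simp add: algebra_simps)
qed

lemma gen2_smult: "gen2 la lb d n (\<lambda>A. c * f A) A = c * gen2 la lb d n f A"
  unfolding gen2_def by (simp add: sum_distrib_left right_diff_distrib algebra_simps)



definition M0 :: "real measure" where "M0 = uniform_measure lborel {0..1}"

lemma sets_M0[measurable_cong, simp]: "sets M0 = sets borel"
  by (simp add: M0_def)

lemma space_M0[simp]: "space M0 = UNIV"
  by (simp add: M0_def)

lemma prob_M0: "prob_space M0"
  unfolding M0_def by (rule prob_space_uniform_measure) auto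

lemma AE_M0: "AE u in M0. 0 \<le> u \<and> u \<le> 1"
  unfolding M0_def by (rule AE_uniform_measureI) auto

lemma L1:
  assumes "0 \<le> z" "z \<le> 1" "0 \<le> w"
  shows "(\<integral>\<^sup>+v. ennreal (if v < z then w else 0) \<partial>M0) = ennreal (z * w)"
proof -
  have "(\<integral>\<^sup>+v. ennreal (if v < z then w else 0) \<partial>M0) = (\<integral>\<^sup>+v. ennreal w * indicator {..<z} v \<partial>M0)"
    by (intro nn_integral_cong) (auto split: split_indicator)
  also have "\<dots> = ennreal w * emeasure M0 {..<z}"
    by (rule nn_integral_cmult_indicator) simp
  also have "emeasure M0 {..<z} = emeasure lborel ({0..1} \<inter> {..<z}) / emeasure lborel {0..1::real}"
    unfolding M0_def by (rule emeasure_uniform_measure) auto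
  also have "{0..1} \<inter> {..<z} = {0..<z}" using assms by auto
  also have "emeasure lborel {0..<z} = ennreal z" using assms by simp
  finally show ?thesis using assms by (simp add: ennreal_mult' mult.commute divide_ennreal_def)
qed

lemma L2:
  assumes a: "a > 0"
  shows "(\<integral>\<^sup>+u. ennreal (u powr a) \<partial>M0) = ennreal (1 / (a + 1))"
proof -
  have "(\<integral>\<^sup>+u. ennreal (u powr a) \<partial>M0) = (\<integral>\<^sup>+u. ennreal (u powr a) * indicator {0..1} u \<partial>lborel) / emeasure lborel {0..1::real}"
    unfolding M0_def by (rule nn_integral_uniform_measure) auto
  also have "emeasure lborel {0..1::real} = 1" by simp
  also have "(\<integral>\<^sup>+u. ennreal (u powr a) * indicator {0..1} u \<partial>lborel) = (\<integral>\<^sup>+u. ennreal (if u \<in> {0..1} then u powr a else 0) \<partial>lborel)"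
    by (intro nn_integral_cong) (auto split: split_indicator)
  also have "\<dots> = ennreal (1 / (a + 1))"
  proof (rule nn_integral_has_integral_lborel)
    show "((\<lambda>u. if u \<in> {0..1} then u powr a else 0) has_integral 1 / (a + 1)) UNIV"
      unfolding has_integral_restrict_UNIV
      using has_integral_powr_from_0[of a 1] a by simp
  qed auto
  finally show ?thesis by (simp add: divide_ennreal_def)
qed



definition MM :: "(real \<times> real) measure" where "MM = M0 \<Otimes>\<^sub>M M0"
definition Om :: "(real \<times> real) stream measure" where "Om = stream_space MM"

definition cl :: "real \<Rightarrow> real" where "cl u = min 1 (max 0 u)"

lemma cl_ge[simp]: "0 \<le> cl u" and cl_le[simp]: "cl u \<le> 1"
  by (auto simp: cl_def)

definition Phi :: "real \<Rightarrow> real \<Rightarrow> (real \<times> real) stream \<Rightarrow> config" where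
  "Phi r x \<omega> i = (snd (\<omega> !! i) < x * (\<Prod>k\<le>i. cl (fst (\<omega> !! k)) powr r))"

lemma prob_MM: "prob_space MM"
  unfolding MM_def by (intro prob_space_pair prob_M0)

lemma prob_Om: "prob_space Om"
  unfolding Om_def by (rule prob_space.prob_space_stream_space[OF prob_MM])

lemma sets_MM[measurable_cong]: "sets MM = sets (borel \<Otimes>\<^sub>M borel)"
  unfolding MM_def by (intro sets_pair_measure_cong) auto

lemma pred_Phi[measurable]: "Measurable.pred Om (\<lambda>\<omega>. Phi r x \<omega> i)"
  unfolding Phi_def Om_def cl_def by measurable

lemma meas_Phi: "Phi r x \<in> measurable Om config_space"
proof -
  have "(\<lambda>\<omega> i. Phi r x \<omega> i) \<in> measurable Om config_space"
    unfolding config_space_def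
    by (rule measurable_PiM_single') (auto simp: pred_def[symmetric])
  then show ?thesis by simp
qed

lemma meas_mon_Phi[measurable]: "finite S \<Longrightarrow> (\<lambda>\<omega>. mon S (Phi r x \<omega>)) \<in> borel_measurable Om"
  unfolding mon_def by measurable

lemma Phi_0: "Phi r x (y ## s) 0 = (snd y < x * cl (fst y) powr r)"
  by (simp add: Phi_def)

lemma Phi_Suc: "Phi r x (y ## s) (Suc i) = Phi r (x * cl (fst y) powr r) s i"
  unfolding Phi_def by (subst prod.atMost_Suc_shift) (simp add: mult.assoc del: prod.atMost_Suc)

lemma mon_Phi_Cons:
  "mon S (Phi r x (y ## s)) = (if 0 \<in> S then (if snd y < x * cl (fst y) powr r then 1 else 0) else 1)
      * mon (shiftS S) (Phi r (x * cl (fst y) powr r) s)"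
proof -
  have "Phi r x (y ## s) = push (snd y < x * cl (fst y) powr r) (Phi r (x * cl (fst y) powr r) s)"
  proof
    fix i show "Phi r x (y ## s) i = push (snd y < x * cl (fst y) powr r) (Phi r (x * cl (fst y) powr r) s) i"
      by (cases i) (simp_all add: push_def Phi_0 Phi_Suc)
  qed
  then have "mon S (Phi r x (y ## s)) = mon S (push (snd y < x * cl (fst y) powr r) (Phi r (x * cl (fst y) powr r) s))"
    by simp
  also have "\<dots> = (if 0 \<in> S \<and> \<not> (snd y < x * cl (fst y) powr r) then 0 else mon (shiftS S) (Phi r (x * cl (fst y) powr r) s))"
    by (rule mono_push)
  finally show ?thesis by (cases "snd y < x * cl (fst y) powr r"; cases "0 \<in> S") simp_all
qed


definition K :: "real \<Rightarrow> nat \<Rightarrow> nat set \<Rightarrow> real" where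
  "K r n S = (\<Prod>k<n. 1 / (1 + r * card {i\<in>S. k \<le> i}))"

lemma K_Suc:
  assumes "finite S"
  shows "K r (Suc n) S = 1 / (1 + r * card S) * K r n (shiftS S)"
proof -
  have "card {i\<in>S. Suc k \<le> i} = card {i\<in>shiftS S. k \<le> i}" for k
  proof -
    have "{i\<in>S. Suc k \<le> i} = Suc ` {i\<in>shiftS S. k \<le> i}"
      by (auto simp: shiftS_def image_iff) (metis Suc_le_D Suc_le_mono)
    then show ?thesis by (simp add: card_image)
  qed
  then show ?thesis unfolding K_def by (subst prod.lessThan_Suc_shift) simp
qed

lemma K_nonneg: "r \<ge> 0 \<Longrightarrow> K r n S \<ge> 0"
  unfolding K_def by (auto intro!: prod_nonneg)

lemma K_empty: "K r n {} = 1"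
  unfolding K_def by simp

lemma G:
  assumes r: "r > 0"
  shows "S \<subseteq> {..<n} \<Longrightarrow> 0 \<le> x \<Longrightarrow> x \<le> 1 \<Longrightarrow>
    (\<integral>\<^sup>+\<omega>. ennreal (mon S (Phi r x \<omega>)) \<partial>Om) = ennreal (x ^ card S * K r n S)"
proof (induction n arbitrary: S x)
  case 0
  then have "S = {}" by auto
  then show ?case using prob_space.emeasure_space_1[OF prob_Om]
    by (simp add: mon_def K_empty)
next
  case (Suc n)
  show ?case
  proof (cases "S = {}")
    case True
    then show ?thesis using prob_space.emeasure_space_1[OF prob_Om]
      by (simp add: mon_def K_empty)
  next
    case False
    define S' where "S' = shiftS S"
    have finS: "finite S" using Suc.prems(1) finite_subset by blast
    have S'n: "S' \<subseteq> {..<n}" using Suc.prems(1) by (auto simp: S'_def shiftS_def)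
    define m where "m = card S"
    define m' where "m' = card S'"
    have m1: "m \<ge> 1" using False finS by (simp add: m_def Suc_leI card_gt_0_iff)
    have mm: "m = (if 0 \<in> S then Suc m' else m')"
      using card_shiftS[OF finS] m1 by (auto simp: m_def m'_def S'_def)
    define K' where "K' = K r n S'"
    have K'0: "K' \<ge> 0" using r by (simp add: K'_def K_nonneg)
    define z where "z y = x * cl (fst y) powr r" for y :: "real \<times> real"
    have z01: "0 \<le> z y" "z y \<le> 1" for y
      using Suc.prems r by (auto simp: z_def intro!: mult_le_one powr_le1)
    define c where "c y = (if 0 \<in> S then (if snd y < z y then 1 else 0) else 1::real)" for y
    define H where "H y = c y * (z y ^ m' * K')" for y
    have "(\<integral>\<^sup>+\<omega>. ennreal (mon S (Phi r x \<omega>)) \<partial>Om)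
        = (\<integral>\<^sup>+y. (\<integral>\<^sup>+s. ennreal (mon S (Phi r x (y ## s))) \<partial>Om) \<partial>MM)"
      unfolding Om_def using finS
      by (intro prob_space.nn_integral_stream_space[OF prob_MM]) (simp add: Om_def[symmetric])
    also have "\<dots> = (\<integral>\<^sup>+y. ennreal (H y) \<partial>MM)"
    proof (intro nn_integral_cong)
      fix y :: "real \<times> real"
      have "(\<integral>\<^sup>+s. ennreal (mon S (Phi r x (y ## s))) \<partial>Om)
          = (\<integral>\<^sup>+s. ennreal (c y) * ennreal (mon S' (Phi r (z y) s)) \<partial>Om)"
      proof (intro nn_integral_cong)
        fix s
        have eq: "mon S (Phi r x (y ## s)) = c y * mon S' (Phi r (z y) s)"
          by (simp add: mon_Phi_Cons c_def z_def S'_def)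
        show "ennreal (mon S (Phi r x (y ## s))) = ennreal (c y) * ennreal (mon S' (Phi r (z y) s))"
          unfolding eq by (rule ennreal_mult) (auto simp: c_def mon_def)
      qed
      also have "\<dots> = ennreal (c y) * (\<integral>\<^sup>+s. ennreal (mon S' (Phi r (z y) s)) \<partial>Om)"
      proof (intro nn_integral_cmult)
        have "finite S'" using S'n finite_subset by blast
        then show "(\<lambda>s. ennreal (mon S' (Phi r (z y) s))) \<in> borel_measurable Om" by measurable
      qed
      also have "(\<integral>\<^sup>+s. ennreal (mon S' (Phi r (z y) s)) \<partial>Om) = ennreal (z y ^ m' * K')"
        unfolding m'_def K'_def by (rule Suc.IH[OF S'n z01])
      also have "ennreal (c y) * ennreal (z y ^ m' * K') = ennreal (H y)"
        by (simp add: H_def c_def ennreal_mult'[symmetric])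
      finally show "(\<integral>\<^sup>+s. ennreal (mon S (Phi r x (y ## s))) \<partial>Om) = ennreal (H y)" .
    qed
    also have "\<dots> = (\<integral>\<^sup>+u. \<integral>\<^sup>+v. ennreal (H (u, v)) \<partial>M0 \<partial>M0)"
      unfolding MM_def
    proof (rule sigma_finite_measure.nn_integral_fst[symmetric])
      show "sigma_finite_measure M0" using prob_M0 prob_space_imp_sigma_finite by blast
      show "(\<lambda>y. ennreal (H y)) \<in> borel_measurable (M0 \<Otimes>\<^sub>M M0)"
        unfolding H_def c_def z_def cl_def by measurable
    qed
    also have "\<dots> = (\<integral>\<^sup>+u. ennreal (x ^ m * K') * ennreal ((cl u powr r) ^ m) \<partial>M0)"
    proof (intro nn_integral_cong)
      fix u :: real
      have zz: "z (u, v) = x * cl u powr r" for v by (simp add: z_def)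
      have "(\<integral>\<^sup>+v. ennreal (H (u, v)) \<partial>M0) = ennreal (x ^ m * K' * (cl u powr r) ^ m)"
      proof (cases "0 \<in> S")
        case True
        have "(\<integral>\<^sup>+v. ennreal (H (u, v)) \<partial>M0)
            = (\<integral>\<^sup>+v. ennreal (if v < x * cl u powr r then (x * cl u powr r) ^ m' * K' else 0) \<partial>M0)"
          by (intro nn_integral_cong) (simp add: H_def c_def True zz)
        also have "\<dots> = ennreal (x * cl u powr r * ((x * cl u powr r) ^ m' * K'))"
          using z01[of "(u,0)"] K'0 by (intro L1) (auto simp: zz)
        also have "x * cl u powr r * ((x * cl u powr r) ^ m' * K') = x ^ m * K' * (cl u powr r) ^ m"
          using mm True by (simp add: power_mult_distrib)
        finally show ?thesis .
      next
        case False
        have "(\<integral>\<^sup>+v. ennreal (H (u, v)) \<partial>M0) = (\<integral>\<^sup>+v. ennreal ((x * cl u powr r) ^ m' * K') \<partial>M0)"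
          by (intro nn_integral_cong) (simp add: H_def c_def False zz)
        also have "\<dots> = ennreal ((x * cl u powr r) ^ m' * K')"
          using prob_space.emeasure_space_1[OF prob_M0] by simp
        also have "(x * cl u powr r) ^ m' * K' = x ^ m * K' * (cl u powr r) ^ m"
          using mm False by (simp add: power_mult_distrib)
        finally show ?thesis .
      qed
      then show "(\<integral>\<^sup>+v. ennreal (H (u, v)) \<partial>M0) = ennreal (x ^ m * K') * ennreal ((cl u powr r) ^ m)"
        using Suc.prems K'0 by (simp add: ennreal_mult'[symmetric] mult.assoc)
    qed
    also have "\<dots> = ennreal (x ^ m * K') * (\<integral>\<^sup>+u. ennreal ((cl u powr r) ^ m) \<partial>M0)"
      unfolding cl_def by (intro nn_integral_cmult) measurable
    also have "(\<integral>\<^sup>+u. ennreal ((cl u powr r) ^ m) \<partial>M0) = (\<integral>\<^sup>+u. ennreal (u powr (r * m)) \<partial>M0)"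
    proof (intro nn_integral_cong_AE)
      show "AE u in M0. ennreal ((cl u powr r) ^ m) = ennreal (u powr (r * m))"
        using AE_M0
      proof eventually_elim
        case (elim u)
        show ?case
        proof (cases "u = 0")
          case True then show ?thesis using m1 by (simp add: cl_def power_0_left)
        next
          case False
          then have "cl u = u" using elim by (simp add: cl_def)
          then show ?thesis using False by (simp add: powr_power mult.commute)
        qed
      qed
    qed
    also have "\<dots> = ennreal (1 / (r * m + 1))"
      using r m1 by (intro L2) simp
    also have "ennreal (x ^ m * K') * ennreal (1 / (r * m + 1)) = ennreal (x ^ card S * K r (Suc n) S)"
      using K_Suc[OF finS, of r n] Suc.prems r K'0
      by (simp add: ennreal_mult'[symmetric] m_def K'_def S'_def algebra_simps)
    finally show ?thesis .
  qed
qed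



lemma space_config[simp]: "space config_space = UNIV"
  by (simp add: config_space_def space_PiM)

lemma meas_mon[measurable]: "finite S \<Longrightarrow> mon S \<in> borel_measurable config_space"
  unfolding mon_def config_space_def by measurable

locale pspace = prob_space \<nu> for \<nu> :: "config measure" +
  assumes sets_nu: "sets \<nu> = sets config_space"
begin

lemma space_nu[simp]: "space \<nu> = UNIV"
  using sets_eq_imp_space_eq[OF sets_nu] by simp

lemma meas_mon_nu: "finite S \<Longrightarrow> mon S \<in> borel_measurable \<nu>"
  using meas_mon measurable_cong_sets[OF sets_nu refl] by blast

lemma int_mon: "finite S \<Longrightarrow> integrable \<nu> (mon S)"
  by (rule integrable_const_bound[where B=1]) (auto simp: meas_mon_nu mon_def)

lemma int_gen_mon:
  assumes "S \<subseteq> {..<n}"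
  shows "integral\<^sup>L \<nu> (gen la lb d (mon S)) =
     (if 0 \<in> S then la else la + lb) * integral\<^sup>L \<nu> (mon (shiftS S)) - (la + lb + d * card S) * integral\<^sup>L \<nu> (mon S)"
proof -
  have fS: "finite S" using assms finite_subset by blast
  have "shiftS S \<subseteq> {..<n}"
  proof
    fix j assume "j \<in> shiftS S"
    then have "Suc j \<in> S" by (simp add: shiftS_def)
    then show "j \<in> {..<n}" using assms by auto
  qed
  then have fS': "finite (shiftS S)" using finite_subset by blast
  define a where "a = (if 0 \<in> S then la else la + lb)"
  define b where "b = la + lb + d * card S"
  have eq: "gen la lb d (mon S) = (\<lambda>A. a * mon (shiftS S) A - b * mon S A)"
  proof
    fix A
    show "gen la lb d (mon S) A = a * mon (shiftS S) A - b * mon S A"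
      unfolding gen_eq_gen2[OF width_mono[OF assms]] gen2_mono[OF assms] a_def b_def ..
  qed
  have "integral\<^sup>L \<nu> (\<lambda>A. a * mon (shiftS S) A - b * mon S A)
      = integral\<^sup>L \<nu> (\<lambda>A. a * mon (shiftS S) A) - integral\<^sup>L \<nu> (\<lambda>A. b * mon S A)"
    by (rule Bochner_Integration.integral_diff) (auto intro!: integrable_mult_right int_mon fS fS')
  also have "\<dots> = a * integral\<^sup>L \<nu> (mon (shiftS S)) - b * integral\<^sup>L \<nu> (mon S)"
    by (simp only: integral_mult_right_zero)
  finally show ?thesis unfolding eq a_def b_def .
qed

lemma int_mon_empty: "integral\<^sup>L \<nu> (mon {}) = 1"
proof -
  have "mon {} = (\<lambda>_. 1)" by (simp add: mon_def fun_eq_iff)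
  then show ?thesis using prob_space by simp
qed

lemma measure_mon: "finite S \<Longrightarrow> measure \<nu> {A. \<forall>i\<in>S. A i} = integral\<^sup>L \<nu> (mon S)"
proof -
  have "mon S = indicator {A. \<forall>i\<in>S. A i}" by (auto simp: mon_def fun_eq_iff)
  then show ?thesis by simp
qed

end


definition mu :: "real \<Rightarrow> real \<Rightarrow> real \<Rightarrow> config measure" where
  "mu la lb d = distr Om config_space (Phi (d / (la + lb)) (la / (la + lb)))"

lemma pspace_mu: "pspace (mu la lb d)"
  unfolding pspace_def pspace_axioms_def mu_def
  by (auto intro!: prob_space.prob_space_distr[OF prob_Om] meas_Phi)

lemma mu_mon:
  assumes pos: "la > 0" "lb > 0" "d > 0" and S: "S \<subseteq> {..<n}"
  shows "integral\<^sup>L (mu la lb d) (mon S) = (la / (la + lb)) ^ card S * K (d / (la + lb)) n S"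
proof -
  have fS: "finite S" using S finite_subset by blast
  have ms: "mon S \<in> borel_measurable (mu la lb d)"
    unfolding mu_def using meas_mon[OF fS] by simp
  have "integral\<^sup>L (mu la lb d) (mon S) = enn2real (\<integral>\<^sup>+A. ennreal (mon S A) \<partial>mu la lb d)"
    by (rule integral_eq_nn_integral[OF ms]) (auto simp: mon_def)
  also have "(\<integral>\<^sup>+A. ennreal (mon S A) \<partial>mu la lb d)
      = (\<integral>\<^sup>+\<omega>. ennreal (mon S (Phi (d / (la + lb)) (la / (la + lb)) \<omega>)) \<partial>Om)"
    unfolding mu_def using fS by (subst nn_integral_distr[OF meas_Phi]) auto
  also have "\<dots> = ennreal ((la / (la + lb)) ^ card S * K (d / (la + lb)) n S)"
    using pos S by (intro G) auto
  finally show ?thesis using pos by (simp add: K_nonneg)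
qed

lemma mu_gen_mon:
  assumes pos: "la > 0" "lb > 0" "d > 0" and S: "S \<subseteq> {..<n}"
  shows "integral\<^sup>L (mu la lb d) (gen la lb d (mon S)) = 0"
proof -
  interpret pspace "mu la lb d" by (rule pspace_mu)
  define l where "l = la + lb"
  define r where "r = d / l"
  define p where "p = la / l"
  have l: "l > 0" using pos by (simp add: l_def)
  have S1: "S \<subseteq> {..<Suc n}" using S by auto
  have S': "shiftS S \<subseteq> {..<n}" using S by (auto simp: shiftS_def)
  have fS: "finite S" using S finite_subset by blast
  define m where "m = card S"
  define m' where "m' = card (shiftS S)"
  have mm: "m = (if 0 \<in> S then Suc m' else m')"
  proof -
    have c0: "0 \<in> S \<Longrightarrow> card S > 0" using fS card_gt_0_iff by blast
    show ?thesis using card_shiftS[OF fS] c0 unfolding m_def m'_def by auto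
  qed
  define K' where "K' = K r n (shiftS S)"
  have e1: "integral\<^sup>L (mu la lb d) (mon S) = p ^ m * (1 / (1 + r * m) * K')"
    using mu_mon[OF pos S1] K_Suc[OF fS, of r n] by (simp add: p_def r_def l_def m_def K'_def)
  have e2: "integral\<^sup>L (mu la lb d) (mon (shiftS S)) = p ^ m' * K'"
    using mu_mon[OF pos S'] by (simp add: p_def r_def l_def m'_def K'_def)
  have "r * m \<ge> 0" using pos l by (simp add: r_def)
  then have rm: "1 + r * m > 0" by linarith
  have key: "(l + d * m) * (1 / (1 + r * m)) = l"
    using l rm by (simp add: r_def field_simps)
  have "integral\<^sup>L (mu la lb d) (gen la lb d (mon S))
      = (if 0 \<in> S then la else l) * (p ^ m' * K') - (l + d * m) * (p ^ m * (1 / (1 + r * m) * K'))"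
    unfolding int_gen_mon[OF S] e1 e2 by (simp add: l_def m_def)
  also have "(l + d * m) * (p ^ m * (1 / (1 + r * m) * K')) = l * p ^ m * K'"
  proof -
    have "(l + d * m) * (p ^ m * (1 / (1 + r * m) * K')) = ((l + d * m) * (1 / (1 + r * m))) * (p ^ m * K')"
      by (simp only: mult_ac)
    then show ?thesis unfolding key by (simp only: mult_ac)
  qed
  also have "(if 0 \<in> S then la else l) * (p ^ m' * K') - l * p ^ m * K' = 0"
  proof (cases "0 \<in> S")
    case True
    have lp: "l * p = la" using l by (simp add: p_def)
    have "l * p ^ m * K' = (l * p) * (p ^ m' * K')" using True mm by (simp add: mult_ac)
    then show ?thesis using True lp by (simp only: if_True)
  next
    case False
    then show ?thesis using mm by (simp add: mult_ac)
  qed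
  finally show ?thesis .
qed

lemma spanM_gen2:
  assumes pos: "la > 0" "lb > 0" "d > 0"
  shows "f \<in> spanM n \<Longrightarrow> integrable (mu la lb d) (gen2 la lb d n f) \<and> integral\<^sup>L (mu la lb d) (gen2 la lb d n f) = 0"
proof (induction rule: spanM.induct)
  case (monI S)
  interpret pspace "mu la lb d" by (rule pspace_mu)
  have fS: "finite S" using monI finite_subset by blast
  have "shiftS S \<subseteq> {..<n}" using monI by (auto simp: shiftS_def)
  then have fS': "finite (shiftS S)" using finite_subset by blast
  have eq: "gen2 la lb d n (mon S) = (\<lambda>A. (if 0 \<in> S then la else la + lb) * mon (shiftS S) A - (la + lb + d * card S) * mon S A)"
    using gen2_mono[OF monI] by (simp add: fun_eq_iff)
  have eq2: "gen2 la lb d n (mon S) = gen la lb d (mon S)"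
    using gen_eq_gen2[OF width_mono[OF monI]] by (simp add: fun_eq_iff)
  have i: "integrable (mu la lb d) (gen2 la lb d n (mon S))"
    unfolding eq by (auto intro!: Bochner_Integration.integrable_diff integrable_mult_right int_mon fS fS')
  have "integral\<^sup>L (mu la lb d) (gen2 la lb d n (mon S)) = 0"
    unfolding eq2 by (rule mu_gen_mon[OF pos monI])
  with i show ?case by simp
next
  case (add f g)
  have eq: "gen2 la lb d n (\<lambda>A. f A + g A) = (\<lambda>A. gen2 la lb d n f A + gen2 la lb d n g A)"
    by (simp add: fun_eq_iff gen2_add)
  show ?case unfolding eq using add.IH by simp
next
  case (smult f c)
  have eq: "gen2 la lb d n (\<lambda>A. c * f A) = (\<lambda>A. c * gen2 la lb d n f A)"
    by (simp add: fun_eq_iff gen2_smult)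
  show ?case unfolding eq using smult.IH by simp
qed

lemma mu_stationary:
  assumes pos: "la > 0" "lb > 0" "d > 0"
  shows "stationary la lb d (mu la lb d)"
  unfolding stationary_def law_evolution_def
proof (intro conjI allI impI)
  interpret pspace "mu la lb d" by (rule pspace_mu)
  fix t :: real
  show "prob_space (mu la lb d)" "sets (mu la lb d) = sets config_space"
    by (rule prob_space_axioms) (rule sets_nu)
next
  fix f :: "config \<Rightarrow> real" and t :: real
  assume "cylinder f" "t \<ge> 0"
  then obtain n where w: "width n f" unfolding cylinder_def width_def by blast
  have "gen la lb d f = gen2 la lb d n f" using gen_eq_gen2[OF w] by (simp add: fun_eq_iff)
  then have "integral\<^sup>L (mu la lb d) (gen la lb d f) = 0"
    using spanM_gen2[OF pos width_spanM[OF w]] by simp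
  then show "((\<lambda>s. integral\<^sup>L (mu la lb d) f) has_real_derivative integral\<^sup>L (mu la lb d) (gen la lb d f)) (at t within {0..})"
    by simp
qed


lemma alg_single0: "(l::real) > 0 \<Longrightarrow> x > 0 \<Longrightarrow> la / x = la / l * (l / x) ^ Suc 0"
  by simp
lemma alg_singleS: "(l::real) > 0 \<Longrightarrow> x > 0 \<Longrightarrow> l * (la / l * (l / x) ^ Suc j) / x = la / l * (l / x) ^ Suc (Suc j)"
  by (simp add: field_simps)
lemma alg_pair0: "(l::real) > 0 \<Longrightarrow> x > 0 \<Longrightarrow> y > 0 \<Longrightarrow> la * (la / l * (l / x) ^ Suc 0) / y = la\<^sup>2 / (l * x) * (l / y) ^ Suc 0"
  by (simp add: field_simps power2_eq_square)
lemma alg_pairS: "(l::real) > 0 \<Longrightarrow> x > 0 \<Longrightarrow> y > 0 \<Longrightarrow> l * (la\<^sup>2 / (l * x) * (l / y) ^ Suc j) / y = la\<^sup>2 / (l * x) * (l / y) ^ Suc (Suc j)"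
  by (simp add: field_simps)

lemma alg_pairv: "(l::real) > 0 \<Longrightarrow> x > 0 \<Longrightarrow> (la / l) ^ 2 * (q * (l / x)) = la\<^sup>2 / (l * x) * q"
  by (simp add: field_simps power2_eq_square)

lemma mu_single:
  assumes pos: "la > 0" "lb > 0" "d > 0"
  shows "integral\<^sup>L (mu la lb d) (mon {j}) = la / (la + lb) * ((la + lb) / (la + lb + d)) ^ Suc j"
proof -
  define l where "l = la + lb"
  have l: "l > 0" using pos by (simp add: l_def)
  have "K (d / l) (Suc j) {j} = (\<Prod>k<Suc j. 1 / (1 + d / l))"
    unfolding K_def
  proof (intro prod.cong refl)
    fix k assume "k \<in> {..<Suc j}"
    then have "{i \<in> {j}. k \<le> i} = {j}" by auto
    then show "1 / (1 + d / l * real (card {i \<in> {j}. k \<le> i})) = 1 / (1 + d / l)" by simp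
  qed
  also have "\<dots> = (l / (l + d)) ^ Suc j"
    using l by (simp add: field_simps)
  finally show ?thesis using mu_mon[OF pos, of "{j}" "Suc j"] by (simp add: l_def)
qed

lemma mu_pair:
  assumes pos: "la > 0" "lb > 0" "d > 0"
  shows "integral\<^sup>L (mu la lb d) (mon {j, Suc j}) =
    la\<^sup>2 / ((la + lb) * (la + lb + d)) * ((la + lb) / (la + lb + 2 * d)) ^ Suc j"
proof -
  define l where "l = la + lb"
  have l: "l > 0" using pos by (simp add: l_def)
  have c2: "card {i \<in> {j, Suc j}. k \<le> i} = 2" if "k < Suc j" for k
  proof -
    have "{i \<in> {j, Suc j}. k \<le> i} = {j, Suc j}" using that by auto
    then show ?thesis by simp
  qed
  have c1: "{i \<in> {j, Suc j}. Suc j \<le> i} = {Suc j}" by auto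
  have "K (d / l) (Suc (Suc j)) {j, Suc j} = (\<Prod>k<Suc j. 1 / (1 + d / l * 2)) * (1 / (1 + d / l))"
  proof -
    have "(\<Prod>k<Suc j. 1 / (1 + d / l * real (card {i \<in> {j, Suc j}. k \<le> i}))) = (\<Prod>k<Suc j. 1 / (1 + d / l * 2))"
    proof (intro prod.cong refl)
      fix k assume "k \<in> {..<Suc j}"
      then show "1 / (1 + d / l * real (card {i \<in> {j, Suc j}. k \<le> i})) = 1 / (1 + d / l * 2)"
        using c2[of k] by simp
    qed
    then show ?thesis unfolding K_def prod.lessThan_Suc[of _ "Suc j"] c1 by simp
  qed
  also have "\<dots> = (l / (l + 2 * d)) ^ Suc j * (l / (l + d))"
    using l pos by (simp add: field_simps)
  finally have Kf: "K (d / l) (Suc (Suc j)) {j, Suc j} = (l / (l + 2 * d)) ^ Suc j * (l / (l + d))" .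
  have cc: "card {j, Suc j} = 2" by simp
  have "integral\<^sup>L (mu la lb d) (mon {j, Suc j}) = (la / l) ^ card {j, Suc j} * K (d / l) (Suc (Suc j)) {j, Suc j}"
    unfolding l_def by (rule mu_mon[OF pos]) auto
  then have "integral\<^sup>L (mu la lb d) (mon {j, Suc j}) = (la / l) ^ 2 * ((l / (l + 2 * d)) ^ Suc j * (l / (l + d)))"
    unfolding Kf cc .
  also have "\<dots> = la\<^sup>2 / (l * (l + d)) * (l / (l + 2 * d)) ^ Suc j"
    using l pos by (intro alg_pairv) auto
  finally show ?thesis by (simp add: l_def)
qed

lemma evol_deriv:
  assumes ev: "law_evolution la lb d \<mu>" and S: "S \<subseteq> {..<n}" and t: "t \<ge> 0"
  shows "((\<lambda>s. integral\<^sup>L (\<mu> s) (mon S)) has_real_derivative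
     ((if 0 \<in> S then la else la + lb) * integral\<^sup>L (\<mu> t) (mon (shiftS S)) - (la + lb + d * card S) * integral\<^sup>L (\<mu> t) (mon S)))
     (at t within {0..})"
proof -
  have ps: "pspace (\<mu> t)" using ev t unfolding law_evolution_def pspace_def pspace_axioms_def by auto
  have cyl: "cylinder (mon S)" using width_mono[OF S] unfolding cylinder_def width_def by blast
  have "((\<lambda>s. integral\<^sup>L (\<mu> s) (mon S)) has_real_derivative integral\<^sup>L (\<mu> t) (gen la lb d (mon S))) (at t within {0..})"
    using ev cyl t unfolding law_evolution_def by blast
  then show ?thesis using pspace.int_gen_mon[OF ps S] by simp
qed

lemma evol_ps: "law_evolution la lb d \<mu> \<Longrightarrow> t \<ge> 0 \<Longrightarrow> pspace (\<mu> t)"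
  unfolding law_evolution_def pspace_def pspace_axioms_def by auto

lemma shiftS_simps: "shiftS {0} = {}" "shiftS {Suc j} = {j}" "shiftS {0, Suc 0} = {0}"
  "shiftS {Suc j, Suc (Suc j)} = {j, Suc j}"
  by (auto simp: shiftS_def)

lemma evol_single:
  assumes pos: "la > 0" "lb > 0" "d > 0" and ev: "law_evolution la lb d \<mu>"
  shows "((\<lambda>t. integral\<^sup>L (\<mu> t) (mon {j})) \<longlongrightarrow> la / (la + lb) * ((la + lb) / (la + lb + d)) ^ Suc j) at_top"
proof (induction j)
  case 0
  have "((\<lambda>t. integral\<^sup>L (\<mu> t) (mon {0})) \<longlongrightarrow> la / (la + lb + d)) at_top"
  proof (rule ode_limit[where g = "\<lambda>_. la"])
    show "la + lb + d > 0" using pos by simp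
    fix t :: real assume t: "t \<ge> 0"
    show "((\<lambda>t. integral\<^sup>L (\<mu> t) (mon {0})) has_real_derivative la - (la + lb + d) * integral\<^sup>L (\<mu> t) (mon {0})) (at t within {0..})"
      using evol_deriv[OF ev _ t, of "{0}" 1] pspace.int_mon_empty[OF evol_ps[OF ev t]]
      by (simp add: shiftS_simps)
  qed simp
  moreover have "la / (la + lb + d) = la / (la + lb) * ((la + lb) / (la + lb + d)) ^ Suc 0"
    using pos by (intro alg_single0) auto
  ultimately show ?case by (simp only:)
next
  case (Suc j)
  have "((\<lambda>t. integral\<^sup>L (\<mu> t) (mon {Suc j})) \<longlongrightarrow> (la + lb) * (la / (la + lb) * ((la + lb) / (la + lb + d)) ^ Suc j) / (la + lb + d)) at_top"
  proof (rule ode_limit[where g = "\<lambda>t. (la + lb) * integral\<^sup>L (\<mu> t) (mon {j})"])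
    show "la + lb + d > 0" using pos by simp
    fix t :: real assume t: "t \<ge> 0"
    show "((\<lambda>t. integral\<^sup>L (\<mu> t) (mon {Suc j})) has_real_derivative (la + lb) * integral\<^sup>L (\<mu> t) (mon {j}) - (la + lb + d) * integral\<^sup>L (\<mu> t) (mon {Suc j})) (at t within {0..})"
      using evol_deriv[OF ev _ t, of "{Suc j}" "Suc (Suc j)"]
      by (simp add: shiftS_simps)
  qed (intro tendsto_mult tendsto_const Suc.IH)
  moreover have "(la + lb) * (la / (la + lb) * ((la + lb) / (la + lb + d)) ^ Suc j) / (la + lb + d)
      = la / (la + lb) * ((la + lb) / (la + lb + d)) ^ Suc (Suc j)"
    using pos by (intro alg_singleS) auto
  ultimately show ?case by (simp only:)
qed

lemma evol_pair:
  assumes pos: "la > 0" "lb > 0" "d > 0" and ev: "law_evolution la lb d \<mu>"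
  shows "((\<lambda>t. integral\<^sup>L (\<mu> t) (mon {j, Suc j})) \<longlongrightarrow>
     la\<^sup>2 / ((la + lb) * (la + lb + d)) * ((la + lb) / (la + lb + 2 * d)) ^ Suc j) at_top"
proof (induction j)
  case 0
  have "((\<lambda>t. integral\<^sup>L (\<mu> t) (mon {0, Suc 0})) \<longlongrightarrow> la * (la / (la + lb) * ((la + lb) / (la + lb + d)) ^ Suc 0) / (la + lb + 2 * d)) at_top"
  proof (rule ode_limit[where g = "\<lambda>t. la * integral\<^sup>L (\<mu> t) (mon {0})"])
    show "la + lb + 2 * d > 0" using pos by simp
    fix t :: real assume t: "t \<ge> 0"
    show "((\<lambda>t. integral\<^sup>L (\<mu> t) (mon {0, Suc 0})) has_real_derivative la * integral\<^sup>L (\<mu> t) (mon {0}) - (la + lb + 2 * d) * integral\<^sup>L (\<mu> t) (mon {0, Suc 0})) (at t within {0..})"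
      using evol_deriv[OF ev _ t, of "{0, Suc 0}" 2]
      by (simp add: shiftS_simps algebra_simps)
  qed (intro tendsto_mult tendsto_const evol_single[OF pos ev])
  moreover have "la * (la / (la + lb) * ((la + lb) / (la + lb + d)) ^ Suc 0) / (la + lb + 2 * d)
      = la\<^sup>2 / ((la + lb) * (la + lb + d)) * ((la + lb) / (la + lb + 2 * d)) ^ Suc 0"
    using pos by (intro alg_pair0) auto
  ultimately show ?case by (simp only:)
next
  case (Suc j)
  have "((\<lambda>t. integral\<^sup>L (\<mu> t) (mon {Suc j, Suc (Suc j)})) \<longlongrightarrow> (la + lb) * (la\<^sup>2 / ((la + lb) * (la + lb + d)) * ((la + lb) / (la + lb + 2 * d)) ^ Suc j) / (la + lb + 2 * d)) at_top"
  proof (rule ode_limit[where g = "\<lambda>t. (la + lb) * integral\<^sup>L (\<mu> t) (mon {j, Suc j})"])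
    show "la + lb + 2 * d > 0" using pos by simp
    fix t :: real assume t: "t \<ge> 0"
    show "((\<lambda>t. integral\<^sup>L (\<mu> t) (mon {Suc j, Suc (Suc j)})) has_real_derivative (la + lb) * integral\<^sup>L (\<mu> t) (mon {j, Suc j}) - (la + lb + 2 * d) * integral\<^sup>L (\<mu> t) (mon {Suc j, Suc (Suc j)})) (at t within {0..})"
      using evol_deriv[OF ev _ t, of "{Suc j, Suc (Suc j)}" "Suc (Suc (Suc j))"]
      by (simp add: shiftS_simps algebra_simps)
  qed (intro tendsto_mult tendsto_const Suc.IH)
  moreover have "(la + lb) * (la\<^sup>2 / ((la + lb) * (la + lb + d)) * ((la + lb) / (la + lb + 2 * d)) ^ Suc j) / (la + lb + 2 * d)
      = la\<^sup>2 / ((la + lb) * (la + lb + d)) * ((la + lb) / (la + lb + 2 * d)) ^ Suc (Suc j)"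
    using pos by (intro alg_pairS) auto
  ultimately show ?case by (simp only:)
qed


lemma set1: "{A :: config. A j} = {A. \<forall>i\<in>{j}. A i}" by auto
lemma set2: "{A :: config. A j \<and> A (Suc j)} = {A. \<forall>i\<in>{j, Suc j}. A i}" by auto

theorem mainTheorem8:
  fixes la lb d :: real
  assumes "la > 0" and "lb > 0" and "d > 0"
  defines "l \<equiv> la + lb"
  shows "(\<exists>\<mu>. stationary la lb d \<mu> \<and>
            (\<forall>i::nat. i \<ge> 1 \<longrightarrow>
               measure \<mu> {A. A (i - 1)} = la / l * (l / (l + d)) ^ i \<and>
               measure \<mu> {A. A (i - 1) \<and> A i} = la\<^sup>2 / (l * (l + d)) * (l / (l + 2 * d)) ^ i))
       \<and> (\<forall>\<mu>. law_evolution la lb d \<mu> \<longrightarrow>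
            (\<forall>i::nat. i \<ge> 1 \<longrightarrow>
               ((\<lambda>t. measure (\<mu> t) {A. A (i - 1)}) \<longlongrightarrow> la / l * (l / (l + d)) ^ i) at_top \<and>
               ((\<lambda>t. measure (\<mu> t) {A. A (i - 1) \<and> A i})
                   \<longlongrightarrow> la\<^sup>2 / (l * (l + d)) * (l / (l + 2 * d)) ^ i) at_top))"
proof -
  note pos = assms(1-3)
  have A: "stationary la lb d (mu la lb d) \<and>
            (\<forall>i::nat. i \<ge> 1 \<longrightarrow>
               measure (mu la lb d) {A. A (i - 1)} = la / l * (l / (l + d)) ^ i \<and>
               measure (mu la lb d) {A. A (i - 1) \<and> A i} = la\<^sup>2 / (l * (l + d)) * (l / (l + 2 * d)) ^ i)"
  proof (intro conjI allI impI)
    show "stationary la lb d (mu la lb d)" by (rule mu_stationary[OF pos])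
  next
    fix i :: nat assume "i \<ge> 1"
    then obtain j where i: "i = Suc j" by (cases i) auto
    interpret pspace "mu la lb d" by (rule pspace_mu)
    show "measure (mu la lb d) {A. A (i - 1)} = la / l * (l / (l + d)) ^ i"
      unfolding i l_def using measure_mon[of "{j}"] mu_single[OF pos, of j] by (simp only: set1 diff_Suc_1) simp
    show "measure (mu la lb d) {A. A (i - 1) \<and> A i} = la\<^sup>2 / (l * (l + d)) * (l / (l + 2 * d)) ^ i"
      unfolding i l_def using measure_mon[of "{j, Suc j}"] mu_pair[OF pos, of j] by (simp only: set2 diff_Suc_1) simp
  qed
  have B: "\<forall>\<mu>. law_evolution la lb d \<mu> \<longrightarrow>
            (\<forall>i::nat. i \<ge> 1 \<longrightarrow>
               ((\<lambda>t. measure (\<mu> t) {A. A (i - 1)}) \<longlongrightarrow> la / l * (l / (l + d)) ^ i) at_top \<and>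
               ((\<lambda>t. measure (\<mu> t) {A. A (i - 1) \<and> A i})
                   \<longlongrightarrow> la\<^sup>2 / (l * (l + d)) * (l / (l + 2 * d)) ^ i) at_top)"
  proof (intro allI impI conjI)
    fix \<mu> :: "real \<Rightarrow> config measure" and i :: nat
    assume ev: "law_evolution la lb d \<mu>" and "i \<ge> 1"
    then obtain j where i: "i = Suc j" by (cases i) auto
    have e1: "eventually (\<lambda>t. integral\<^sup>L (\<mu> t) (mon {j}) = measure (\<mu> t) {A. A (i - 1)}) at_top"
      using eventually_ge_at_top[of 0]
    proof eventually_elim
      case (elim t)
      show ?case unfolding i diff_Suc_1 set1 by (rule pspace.measure_mon[OF evol_ps[OF ev elim], symmetric]) simp
    qed
    have e2: "eventually (\<lambda>t. integral\<^sup>L (\<mu> t) (mon {j, Suc j}) = measure (\<mu> t) {A. A (i - 1) \<and> A i}) at_top"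
      using eventually_ge_at_top[of 0]
    proof eventually_elim
      case (elim t)
      show ?case unfolding i diff_Suc_1 set2 by (rule pspace.measure_mon[OF evol_ps[OF ev elim], symmetric]) simp
    qed
    show "((\<lambda>t. measure (\<mu> t) {A. A (i - 1)}) \<longlongrightarrow> la / l * (l / (l + d)) ^ i) at_top"
      using tendsto_cong[OF e1] evol_single[OF pos ev, of j] unfolding i l_def by blast
    show "((\<lambda>t. measure (\<mu> t) {A. A (i - 1) \<and> A i}) \<longlongrightarrow> la\<^sup>2 / (l * (l + d)) * (l / (l + 2 * d)) ^ i) at_top"
      using tendsto_cong[OF e2] evol_pair[OF pos ev, of j] unfolding i l_def by blast
  qed
  from A B show ?thesis by blast
qed



end
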